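(* Let $d,n$ be integers with $1\le d<n$, $p=d/n$, $q=1-p$, and let $\mathbf{A}$ be a random $n\times n$ matrix whose entries are independently nonzero with probability $p$ and zero with probability $q$. Then the expected number of vertices of the sparse trellis $\mathcal{T}^{\mathrm s}_n(\mathbf{A})$ is at most $$U(n)=\sum_{j=0}^n\sum_{k=0}^j(-1)^k\binom{n}{j}\binom{j}{k}\big(q^k-q^j\big)^j,$$ and $U(n)\le\big(2-e^{-d}\big)^n$.
   Context: Convention $0^0=1$. The sparse trellis $\mathcal{T}^{\mathrm s}_n(\mathbf{A})=(V,E,L)$ is built as follows: $V_0=\{\varnothing\}$; for $j=1,\dots,n$, for every $u\in V_{j-1}$ and every $i\in[n]\setminus u$ with $a_{ij}\ne0$, add $v=u\cup\{i\}$ to $V_j$ and add the edge $(u,v)$ with label $a_{ij}$. Its vertex set is $V=V_0\cup\dots\cup V_n$. *)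

theory Defs
  imports Main "HOL-Analysis.Analysis"
begin

text \<open>Sparse trellis of an n x n matrix A (0-based indices: rows and columns in {0..<n}).
  Level j (1-based, as in the paper) uses column j, here column j-1.\<close>

fun trellis_level :: "nat \<Rightarrow> (nat \<Rightarrow> nat \<Rightarrow> 'a::zero) \<Rightarrow> nat \<Rightarrow> nat set set" where
  "trellis_level n A 0 = {{}}"
| "trellis_level n A (Suc j) =
     {insert i u | u i. u \<in> trellis_level n A j \<and> i \<in> {0..<n} - u \<and> A i j \<noteq> 0}"

definition trellis_vertices :: "nat \<Rightarrow> (nat \<Rightarrow> nat \<Rightarrow> 'a::zero) \<Rightarrow> nat set set" where
  "trellis_vertices n A = (\<Union>j\<in>{0..n}. trellis_level n A j)"

definition supp_matrix :: "(nat \<times> nat) set \<Rightarrow> nat \<Rightarrow> nat \<Rightarrow> real" where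
  "supp_matrix S i j = (if (i, j) \<in> S then 1 else 0)"

text \<open>Expected number of trellis vertices when every entry of an n x n matrix is independently
  nonzero with probability p: sum over all supports S of its probability times the count.\<close>
definition expected_trellis_vertices :: "nat \<Rightarrow> real \<Rightarrow> real" where
  "expected_trellis_vertices n p =
     (\<Sum>S\<in>Pow ({0..<n} \<times> {0..<n}).
        p ^ card S * (1 - p) ^ (n * n - card S) * real (card (trellis_vertices n (supp_matrix S))))"

definition U_bound :: "nat \<Rightarrow> real \<Rightarrow> real" where
  "U_bound n q = (\<Sum>j=0..n. \<Sum>k=0..j. (-1) ^ k * real (n choose j) * real (j choose k) * (q ^ k - q ^ j) ^ j)"

end

theory Submission
  imports Defs
begin


definition W :: "real \<Rightarrow> 'x set \<Rightarrow> 'x set \<Rightarrow> real" where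
  "W p X S = (\<Prod>x\<in>X. if x \<in> S then p else 1 - p)"

lemma W_eq:
  assumes "finite X" "S \<subseteq> X"
  shows "W p X S = p ^ card S * (1 - p) ^ (card X - card S)"
proof -
  have "W p X S = (\<Prod>x\<in>S. if x \<in> S then p else 1 - p) * (\<Prod>x\<in>X - S. if x \<in> S then p else 1 - p)"
    unfolding W_def using assms by (subst prod.subset_diff[of S X]) (auto simp: mult.commute)
  also have "\<dots> = (\<Prod>x\<in>S. p) * (\<Prod>x\<in>X - S. 1 - p)"
    by (intro arg_cong2[where f="(*)"] prod.cong) auto
  finally show ?thesis using assms by (simp add: card_Diff_subset finite_subset)
qed

lemma W_total:
  assumes "finite X"
  shows "(\<Sum>S\<in>Pow X. W p X S) = 1"
proof -
  have "(\<Prod>x\<in>X. p + (1 - p)) = (\<Sum>S\<in>Pow X. (\<Prod>x\<in>S. p) * (\<Prod>x\<in>X - S. 1 - p))"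
    by (rule prod_add[OF assms])
  moreover have "(\<Prod>x\<in>S. p) * (\<Prod>x\<in>X - S. 1 - p) = W p X S" if "S \<in> Pow X" for S
    using W_eq[of X S p] that assms by (simp add: card_Diff_subset finite_subset)
  ultimately show ?thesis by simp
qed

lemma W_nonneg: "0 \<le> p \<Longrightarrow> p \<le> 1 \<Longrightarrow> 0 \<le> W p X S"
  unfolding W_def by (intro prod_nonneg) auto

lemma E_empty:
  assumes "finite X" "Z \<subseteq> X"
  shows "(\<Sum>S\<in>Pow X. W p X S * of_bool (S \<inter> Z = {})) = (1 - p) ^ card Z"
proof -
  have "(\<Sum>S\<in>Pow X. W p X S * of_bool (S \<inter> Z = {})) = (\<Sum>S\<in>{S\<in>Pow X. S \<inter> Z = {}}. W p X S)"
    using assms by (simp add: sum.inter_filter[symmetric] of_bool_def if_distrib cong: if_cong)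
  also have "{S\<in>Pow X. S \<inter> Z = {}} = Pow (X - Z)" by auto
  also have "(\<Sum>S\<in>Pow (X - Z). W p X S) = (\<Sum>S\<in>Pow (X - Z). (1 - p) ^ card Z * W p (X - Z) S)"
  proof (rule sum.cong[OF refl])
    fix S assume S: "S \<in> Pow (X - Z)"
    have "W p X S = (\<Prod>x\<in>X - Z. if x \<in> S then p else 1 - p) * (\<Prod>x\<in>Z. if x \<in> S then p else 1 - p)"
      unfolding W_def using assms by (subst prod.subset_diff[of Z X]) auto
    also have "(\<Prod>x\<in>Z. if x \<in> S then p else 1 - p) = (\<Prod>x\<in>Z. 1 - p)"
      using S by (intro prod.cong) auto
    finally show "W p X S = (1 - p) ^ card Z * W p (X - Z) S" by (simp add: W_def mult.commute)
  qed
  also have "\<dots> = (1 - p) ^ card Z" using assms by (simp add: sum_distrib_left[symmetric] W_total)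
  finally show ?thesis .
qed

lemma incl_excl_prod:
  assumes "finite I"
  shows "(\<Prod>i\<in>I. 1 - e i) = (\<Sum>K\<in>Pow I. (-1) ^ card K * (\<Prod>i\<in>K. e i :: real))"
proof -
  have "(\<Prod>i\<in>I. (- e i) + 1) = (\<Sum>K\<in>Pow I. (\<Prod>i\<in>K. - e i) * (\<Prod>i\<in>I - K. 1))"
    by (rule prod_add[OF assms])
  moreover have "(\<Prod>i\<in>K. - e i) = (-1) ^ card K * (\<Prod>i\<in>K. e i)" for K
    by (simp add: prod_uminus)  
  ultimately show ?thesis by simp
qed

lemma prod_of_bool: "finite K \<Longrightarrow> (\<Prod>i\<in>K. of_bool (P i) :: real) = of_bool (\<forall>i\<in>K. P i)"
  by (induction K rule: finite_induct) auto

lemma sum_Pow_card: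
  assumes "finite R"
  shows "(\<Sum>K\<in>Pow R. g (card K)) = (\<Sum>k=0..card R. real (card R choose k) * g k)"
proof -
  have "(\<Sum>K\<in>Pow R. g (card K)) = (\<Sum>k=0..card R. \<Sum>K\<in>{K\<in>Pow R. card K = k}. g (card K))"
    using assms by (intro sum.group[symmetric]) (auto intro: card_mono)
  also have "\<dots> = (\<Sum>k=0..card R. real (card R choose k) * g k)"
  proof (rule sum.cong[OF refl])
    fix k
    have "{K\<in>Pow R. card K = k} = {K. K \<subseteq> R \<and> card K = k}" by auto
    then show "(\<Sum>K\<in>{K\<in>Pow R. card K = k}. g (card K)) = real (card R choose k) * g k"
      using n_subsets[OF assms, of k] by simp
  qed
  finally show ?thesis .
qed

lemma sum_Pow_neg_pow:
  assumes "finite C"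
  shows "(\<Sum>L\<in>Pow C. (- a) ^ card L) = (1 - a :: real) ^ card C"
proof -
  have "(\<Prod>i\<in>C. (- a) + 1) = (\<Sum>L\<in>Pow C. (\<Prod>i\<in>L. - a) * (\<Prod>i\<in>C - L. 1))"
    by (rule prod_add[OF assms])
  then show ?thesis by simp
qed

lemma indicator_expand:
  assumes "finite R" "finite C"
  shows "(of_bool ((\<forall>i\<in>R. \<exists>c\<in>C. (i,c) \<in> S) \<and> (\<forall>c\<in>C. \<exists>i\<in>R. (i,c) \<in> S)) :: real)
    = (\<Sum>K\<in>Pow R. \<Sum>L\<in>Pow C. (-1) ^ card K * (-1) ^ card L * of_bool (S \<inter> (K \<times> C \<union> R \<times> L) = {}))"
proof -
  have r: "(of_bool (\<forall>i\<in>R. \<exists>c\<in>C. (i,c) \<in> S) :: real)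
      = (\<Sum>K\<in>Pow R. (-1) ^ card K * of_bool (\<forall>i\<in>K. \<forall>c\<in>C. (i,c) \<notin> S))"
  proof -
    have "(\<Prod>i\<in>R. 1 - of_bool (\<forall>c\<in>C. (i,c) \<notin> S)) = (\<Prod>i\<in>R. of_bool (\<exists>c\<in>C. (i,c) \<in> S) :: real)"
      by (intro prod.cong) auto
    note h = this
    have "(of_bool (\<forall>i\<in>R. \<exists>c\<in>C. (i,c) \<in> S) :: real) = (\<Prod>i\<in>R. 1 - of_bool (\<forall>c\<in>C. (i,c) \<notin> S))"
      unfolding h by (rule prod_of_bool[OF assms(1), symmetric])
    also have "\<dots> = (\<Sum>K\<in>Pow R. (-1) ^ card K * (\<Prod>i\<in>K. of_bool (\<forall>c\<in>C. (i,c) \<notin> S)))"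
      by (rule incl_excl_prod[OF assms(1)])
    also have "\<dots> = (\<Sum>K\<in>Pow R. (-1) ^ card K * of_bool (\<forall>i\<in>K. \<forall>c\<in>C. (i,c) \<notin> S))"
      using assms by (intro sum.cong refl) (auto simp: prod_of_bool finite_subset)
    finally show ?thesis .
  qed
  have c: "(of_bool (\<forall>c\<in>C. \<exists>i\<in>R. (i,c) \<in> S) :: real)
      = (\<Sum>L\<in>Pow C. (-1) ^ card L * of_bool (\<forall>c\<in>L. \<forall>i\<in>R. (i,c) \<notin> S))"
  proof -
    have "(\<Prod>c\<in>C. 1 - of_bool (\<forall>i\<in>R. (i,c) \<notin> S)) = (\<Prod>c\<in>C. of_bool (\<exists>i\<in>R. (i,c) \<in> S) :: real)"
      by (intro prod.cong) auto
    note h = this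
    have "(of_bool (\<forall>c\<in>C. \<exists>i\<in>R. (i,c) \<in> S) :: real) = (\<Prod>c\<in>C. 1 - of_bool (\<forall>i\<in>R. (i,c) \<notin> S))"
      unfolding h by (rule prod_of_bool[OF assms(2), symmetric])
    also have "\<dots> = (\<Sum>L\<in>Pow C. (-1) ^ card L * (\<Prod>c\<in>L. of_bool (\<forall>i\<in>R. (i,c) \<notin> S)))"
      by (rule incl_excl_prod[OF assms(2)])
    also have "\<dots> = (\<Sum>L\<in>Pow C. (-1) ^ card L * of_bool (\<forall>c\<in>L. \<forall>i\<in>R. (i,c) \<notin> S))"
      using assms by (intro sum.cong refl) (auto simp: prod_of_bool finite_subset)
    finally show ?thesis .
  qed
  have "(of_bool ((\<forall>i\<in>R. \<exists>c\<in>C. (i,c) \<in> S) \<and> (\<forall>c\<in>C. \<exists>i\<in>R. (i,c) \<in> S)) :: real)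
     = of_bool (\<forall>i\<in>R. \<exists>c\<in>C. (i,c) \<in> S) * of_bool (\<forall>c\<in>C. \<exists>i\<in>R. (i,c) \<in> S)" by simp
  also have "\<dots> = (\<Sum>K\<in>Pow R. \<Sum>L\<in>Pow C. ((-1) ^ card K * of_bool (\<forall>i\<in>K. \<forall>c\<in>C. (i,c) \<notin> S)) *
        ((-1) ^ card L * of_bool (\<forall>c\<in>L. \<forall>i\<in>R. (i,c) \<notin> S)))"
    unfolding r c by (rule sum_product)
  also have "\<dots> = (\<Sum>K\<in>Pow R. \<Sum>L\<in>Pow C. (-1) ^ card K * (-1) ^ card L * of_bool (S \<inter> (K \<times> C \<union> R \<times> L) = {}))"
  proof (intro sum.cong refl)
    fix K L assume "K \<in> Pow R" "L \<in> Pow C"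
    then have e: "((\<forall>i\<in>K. \<forall>c\<in>C. (i,c) \<notin> S) \<and> (\<forall>c\<in>L. \<forall>i\<in>R. (i,c) \<notin> S)) = (S \<inter> (K \<times> C \<union> R \<times> L) = {})"
      by auto
    then show "((-1) ^ card K * of_bool (\<forall>i\<in>K. \<forall>c\<in>C. (i,c) \<notin> S)) *
        ((-1) ^ card L * of_bool (\<forall>c\<in>L. \<forall>i\<in>R. (i,c) \<notin> S)) =
       (-1) ^ card K * (-1) ^ card L * (of_bool (S \<inter> (K \<times> C \<union> R \<times> L) = {}) :: real)"
      by (simp only: e[symmetric] of_bool_conj mult_ac)
  qed
  finally show ?thesis .
qed

lemma card_KC_RL:
  assumes "finite R" "finite C" "K \<subseteq> R" "L \<subseteq> C"
  shows "card (K \<times> C \<union> R \<times> L) = card K * card C + card R * card L - card K * card L"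
proof -
  have fin: "finite K" "finite L" using assms finite_subset by auto
  have "card (K \<times> C) + card (R \<times> L) = card (K \<times> C \<union> R \<times> L) + card (K \<times> C \<inter> R \<times> L)"
    using assms fin by (intro card_Un_Int) auto
  moreover have "K \<times> C \<inter> R \<times> L = K \<times> L" using assms by auto
  ultimately show ?thesis by (simp add: card_cartesian_product)
qed




lemma probG_a:
  assumes "finite R" "finite C"
  shows "W p X S * of_bool ((\<forall>i\<in>R. \<exists>c\<in>C. (i,c) \<in> S) \<and> (\<forall>c\<in>C. \<exists>i\<in>R. (i,c) \<in> S))
      = (\<Sum>K\<in>Pow R. \<Sum>L\<in>Pow C. W p X S * ((-1) ^ card K * (-1) ^ card L * of_bool (S \<inter> (K \<times> C \<union> R \<times> L) = {})))"
  unfolding indicator_expand[OF assms] sum_distrib_left ..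

lemma probG_c:
  assumes "finite X" "K \<subseteq> R" "L \<subseteq> C" "R \<times> C \<subseteq> X" "finite R" "finite C"
  shows "(\<Sum>S\<in>Pow X. W p X S * ((-1) ^ card K * (-1) ^ card L * of_bool (S \<inter> (K \<times> C \<union> R \<times> L) = {})))
      = (-1) ^ card K * (-1) ^ card L * (1 - p) ^ (card K * card C + card R * card L - card K * card L)"
proof -
  have "(\<Sum>S\<in>Pow X. W p X S * ((-1) ^ card K * (-1) ^ card L * of_bool (S \<inter> (K \<times> C \<union> R \<times> L) = {})))
      = (-1) ^ card K * (-1) ^ card L * (\<Sum>S\<in>Pow X. W p X S * of_bool (S \<inter> (K \<times> C \<union> R \<times> L) = {}))"
    unfolding sum_distrib_left by (intro sum.cong refl) (simp only: mult_ac)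
  also have "(\<Sum>S\<in>Pow X. W p X S * of_bool (S \<inter> (K \<times> C \<union> R \<times> L) = {})) = (1 - p) ^ card (K \<times> C \<union> R \<times> L)"
    using assms by (intro E_empty) auto
  finally show ?thesis using card_KC_RL[OF assms(5,6,2,3)] by simp
qed

lemma neg_pow: "(- x) ^ n = (-1) ^ n * (x::real) ^ n"
  by (induction n) auto

lemma probG_d:
  assumes "finite C" "card C = j" "k \<le> j"
  shows "(\<Sum>L\<in>Pow C. (-1) ^ k * (-1) ^ card L * (q::real) ^ (k * j + j * card L - k * card L))
      = (-1) ^ k * (q ^ k - q ^ j) ^ j"
proof -
  have e: "q ^ (k * j + j * l - k * l) = (q ^ k) ^ j * (q ^ (j - k)) ^ l" for l
  proof -
    have x: "k * j + j * l - k * l = k * j + (j - k) * l"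
      using assms(3) by (simp add: diff_mult_distrib mult_le_mono1)
    have "q ^ (k * j + j * l - k * l) = q ^ (k * j + (j - k) * l)" using x by (rule arg_cong)
    also have "\<dots> = q ^ (k * j) * q ^ ((j - k) * l)" by (rule power_add)
    also have "q ^ (k * j) = (q ^ k) ^ j" by (rule power_mult)
    also have "q ^ ((j - k) * l) = (q ^ (j - k)) ^ l" by (rule power_mult)
    finally show ?thesis .
  qed
  have "(\<Sum>L\<in>Pow C. (-1) ^ k * (-1) ^ card L * q ^ (k * j + j * card L - k * card L))
      = (\<Sum>L\<in>Pow C. ((-1) ^ k * (q ^ k) ^ j) * (- (q ^ (j - k))) ^ card L)"
  proof (intro sum.cong refl)
    fix L
    show "(-1) ^ k * (-1) ^ card L * q ^ (k * j + j * card L - k * card L) = ((-1) ^ k * (q ^ k) ^ j) * (- (q ^ (j - k))) ^ card L"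
      unfolding e neg_pow[of "q ^ (j - k)"] by (simp only: mult_ac)
  qed
  also have "\<dots> = (-1) ^ k * (q ^ k) ^ j * (\<Sum>L\<in>Pow C. (- (q ^ (j - k))) ^ card L)"
    by (simp only: sum_distrib_left)
  also have "\<dots> = (-1) ^ k * (q ^ k) ^ j * (1 - q ^ (j - k)) ^ j"
    using sum_Pow_neg_pow[OF assms(1), of "q ^ (j - k)"] assms(2) by simp
  also have "\<dots> = (-1) ^ k * (q ^ k - q ^ j) ^ j"
  proof -
    have "q ^ k * (1 - q ^ (j - k)) = q ^ k - q ^ j"
      using assms(3) by (simp add: right_diff_distrib power_add[symmetric])
    then show ?thesis by (simp add: power_mult_distrib[symmetric] mult.assoc)
  qed
  finally show ?thesis .
qed

lemma swap3: "(\<Sum>S\<in>A. \<Sum>K\<in>B. \<Sum>L\<in>C K. f S K L) = (\<Sum>K\<in>B. \<Sum>L\<in>C K. \<Sum>S\<in>A. f S K L)"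
proof -
  have "(\<Sum>S\<in>A. \<Sum>K\<in>B. \<Sum>L\<in>C K. f S K L) = (\<Sum>K\<in>B. \<Sum>S\<in>A. \<Sum>L\<in>C K. f S K L)"
    by (rule sum.swap)
  also have "\<dots> = (\<Sum>K\<in>B. \<Sum>L\<in>C K. \<Sum>S\<in>A. f S K L)"
    by (intro sum.cong refl sum.swap)
  finally show ?thesis .
qed

lemma probG:
  assumes "finite X" "finite R" "finite C" "R \<times> C \<subseteq> X" "card R = j" "card C = j"
  shows "(\<Sum>S\<in>Pow X. W p X S * of_bool ((\<forall>i\<in>R. \<exists>c\<in>C. (i,c) \<in> S) \<and> (\<forall>c\<in>C. \<exists>i\<in>R. (i,c) \<in> S)))
    = (\<Sum>k=0..j. (-1) ^ k * real (j choose k) * ((1 - p) ^ k - (1 - p) ^ j) ^ j)"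
proof -
  define q where "q = 1 - p"
  have "(\<Sum>S\<in>Pow X. W p X S * of_bool ((\<forall>i\<in>R. \<exists>c\<in>C. (i,c) \<in> S) \<and> (\<forall>c\<in>C. \<exists>i\<in>R. (i,c) \<in> S)))
     = (\<Sum>S\<in>Pow X. \<Sum>K\<in>Pow R. \<Sum>L\<in>Pow C. W p X S * ((-1) ^ card K * (-1) ^ card L * of_bool (S \<inter> (K \<times> C \<union> R \<times> L) = {})))"
    by (intro sum.cong refl probG_a assms(2,3))
  also have "\<dots> = (\<Sum>K\<in>Pow R. \<Sum>L\<in>Pow C. \<Sum>S\<in>Pow X. W p X S * ((-1) ^ card K * (-1) ^ card L * of_bool (S \<inter> (K \<times> C \<union> R \<times> L) = {})))"
    by (rule swap3)
  also have "\<dots> = (\<Sum>K\<in>Pow R. \<Sum>L\<in>Pow C. (-1) ^ card K * (-1) ^ card L * q ^ (card K * j + j * card L - card K * card L))"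
  proof (intro sum.cong refl)
    fix K L assume KL: "K \<in> Pow R" "L \<in> Pow C"
    show "(\<Sum>S\<in>Pow X. W p X S * ((-1) ^ card K * (-1) ^ card L * of_bool (S \<inter> (K \<times> C \<union> R \<times> L) = {})))
      = (-1) ^ card K * (-1) ^ card L * q ^ (card K * j + j * card L - card K * card L)"
      using KL by (intro probG_c[OF assms(1) _ _ assms(4,2,3), of K L p, unfolded assms(5,6), folded q_def]) auto
  qed
  also have "\<dots> = (\<Sum>K\<in>Pow R. (-1) ^ card K * (q ^ card K - q ^ j) ^ j)"
  proof (rule sum.cong[OF refl])
    fix K assume K: "K \<in> Pow R"
    have "card K \<le> card R" using K by (intro card_mono[OF assms(2)]) auto
    then have kj: "card K \<le> j" using assms(5) by simp
    show "(\<Sum>L\<in>Pow C. (-1) ^ card K * (-1) ^ card L * q ^ (card K * j + j * card L - card K * card L))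
      = (-1) ^ card K * (q ^ card K - q ^ j) ^ j"
      by (rule probG_d[OF assms(3,6) kj])
  qed
  also have "\<dots> = (\<Sum>k=0..j. real (j choose k) * ((-1) ^ k * (q ^ k - q ^ j) ^ j))"
    using sum_Pow_card[OF assms(2), of "\<lambda>k. (-1) ^ k * (q ^ k - q ^ j) ^ j"] unfolding assms(5) .
  also have "\<dots> = (\<Sum>k=0..j. (-1) ^ k * real (j choose k) * ((1 - p) ^ k - (1 - p) ^ j) ^ j)"
    unfolding q_def by (intro sum.cong refl) (simp only: mult_ac)
  finally show ?thesis .
qed

lemma probCol:
  assumes "finite X" "finite R" "finite C" "R \<times> C \<subseteq> X"
  shows "(\<Sum>S\<in>Pow X. W p X S * of_bool (\<forall>c\<in>C. \<exists>i\<in>R. (i,c) \<in> S))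
    = (1 - (1 - p) ^ card R) ^ card C"
proof -
  define q where "q = 1 - p"
  have ind: "(of_bool (\<forall>c\<in>C. \<exists>i\<in>R. (i,c) \<in> S) :: real)
      = (\<Sum>L\<in>Pow C. (-1) ^ card L * of_bool (S \<inter> (R \<times> L) = {}))" for S
  proof -
    have h: "(\<Prod>c\<in>C. 1 - of_bool (\<forall>i\<in>R. (i,c) \<notin> S)) = (\<Prod>c\<in>C. of_bool (\<exists>i\<in>R. (i,c) \<in> S) :: real)"
      by (intro prod.cong) auto
    have "(of_bool (\<forall>c\<in>C. \<exists>i\<in>R. (i,c) \<in> S) :: real) = (\<Prod>c\<in>C. 1 - of_bool (\<forall>i\<in>R. (i,c) \<notin> S))"
      unfolding h by (rule prod_of_bool[OF assms(3), symmetric])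
    also have "\<dots> = (\<Sum>L\<in>Pow C. (-1) ^ card L * (\<Prod>c\<in>L. of_bool (\<forall>i\<in>R. (i,c) \<notin> S)))"
      by (rule incl_excl_prod[OF assms(3)])
    also have "\<dots> = (\<Sum>L\<in>Pow C. (-1) ^ card L * of_bool (S \<inter> (R \<times> L) = {}))"
    proof (intro sum.cong refl)
      fix L assume "L \<in> Pow C"
      then have "finite L" using assms(3) finite_subset by auto
      then have "(\<Prod>c\<in>L. of_bool (\<forall>i\<in>R. (i,c) \<notin> S)) = (of_bool (\<forall>c\<in>L. \<forall>i\<in>R. (i,c) \<notin> S) :: real)"
        by (rule prod_of_bool)
      also have "(\<forall>c\<in>L. \<forall>i\<in>R. (i,c) \<notin> S) = (S \<inter> (R \<times> L) = {})" by auto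
      finally show "(-1) ^ card L * (\<Prod>c\<in>L. of_bool (\<forall>i\<in>R. (i,c) \<notin> S)) = (-1) ^ card L * (of_bool (S \<inter> (R \<times> L) = {}) :: real)"
        by simp
    qed
    finally show ?thesis .
  qed
  have "(\<Sum>S\<in>Pow X. W p X S * of_bool (\<forall>c\<in>C. \<exists>i\<in>R. (i,c) \<in> S))
      = (\<Sum>S\<in>Pow X. \<Sum>L\<in>Pow C. (-1) ^ card L * (W p X S * of_bool (S \<inter> (R \<times> L) = {})))"
    unfolding ind sum_distrib_left by (intro sum.cong refl) (simp only: mult_ac)
  also have "\<dots> = (\<Sum>L\<in>Pow C. (-1) ^ card L * (\<Sum>S\<in>Pow X. W p X S * of_bool (S \<inter> (R \<times> L) = {})))"
    by (subst sum.swap) (simp only: sum_distrib_left)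
  also have "\<dots> = (\<Sum>L\<in>Pow C. (-1) ^ card L * q ^ (card R * card L))"
  proof (intro sum.cong refl)
    fix L assume L: "L \<in> Pow C"
    have "R \<times> L \<subseteq> X" using L assms(4) by auto
    then have "(\<Sum>S\<in>Pow X. W p X S * of_bool (S \<inter> (R \<times> L) = {})) = q ^ card (R \<times> L)"
      unfolding q_def by (rule E_empty[OF assms(1)])
    then show "(-1) ^ card L * (\<Sum>S\<in>Pow X. W p X S * of_bool (S \<inter> (R \<times> L) = {})) = (-1) ^ card L * q ^ (card R * card L)"
      by (simp add: card_cartesian_product)
  qed
  also have "\<dots> = (\<Sum>L\<in>Pow C. (- (q ^ card R)) ^ card L)"
    by (intro sum.cong refl) (simp only: neg_pow[of "q ^ card R"] power_mult)
  also have "\<dots> = (1 - q ^ card R) ^ card C"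
    by (rule sum_Pow_neg_pow[OF assms(3)])
  finally show ?thesis unfolding q_def .
qed


lemma level_sub:
  "trellis_level n (supp_matrix S) j \<subseteq> {v. v \<subseteq> {0..<n} \<and> card v = j \<and>
      ((\<forall>i\<in>v. \<exists>c\<in>{0..<j}. (i,c) \<in> S) \<and> (\<forall>c\<in>{0..<j}. \<exists>i\<in>v. (i,c) \<in> S))}"
proof (induction j)
  case 0
  then show ?case by auto
next
  case (Suc j)
  show ?case
  proof
    fix v assume "v \<in> trellis_level n (supp_matrix S) (Suc j)"
    then obtain u i where v: "v = insert i u" and u: "u \<in> trellis_level n (supp_matrix S) j"
      and i: "i \<in> {0..<n} - u" and a: "supp_matrix S i j \<noteq> 0" by auto
    from a have ij: "(i, j) \<in> S" by (simp add: supp_matrix_def split: if_splits)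
    from u Suc.IH have IH: "u \<subseteq> {0..<n}" "card u = j"
      "\<forall>i\<in>u. \<exists>c\<in>{0..<j}. (i,c) \<in> S" "\<forall>c\<in>{0..<j}. \<exists>i\<in>u. (i,c) \<in> S" by auto
    have fu: "finite u" using IH(1) finite_subset by blast
    have "card v = Suc j" using v i fu IH(2) by simp
    moreover have "v \<subseteq> {0..<n}" using v i IH(1) by auto
    moreover have "\<forall>x\<in>v. \<exists>c\<in>{0..<Suc j}. (x,c) \<in> S"
    proof
      fix x assume "x \<in> v"
      then show "\<exists>c\<in>{0..<Suc j}. (x,c) \<in> S"
      proof (cases "x = i")
        case True then show ?thesis using ij by auto
      next
        case False then have "x \<in> u" using \<open>x \<in> v\<close> v by auto
        then obtain c where "c \<in> {0..<j}" "(x,c) \<in> S" using IH(3) by blast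
        then show ?thesis by (intro bexI[of _ c]) auto
      qed
    qed
    moreover have "\<forall>c\<in>{0..<Suc j}. \<exists>x\<in>v. (x,c) \<in> S"
    proof
      fix c assume c: "c \<in> {0..<Suc j}"
      show "\<exists>x\<in>v. (x,c) \<in> S"
      proof (cases "c = j")
        case True then show ?thesis using ij v by auto
      next
        case False then have "c \<in> {0..<j}" using c by auto
        then obtain x where "x \<in> u" "(x,c) \<in> S" using IH(4) by blast
        then show ?thesis using v by auto
      qed
    qed
    ultimately show "v \<in> {v. v \<subseteq> {0..<n} \<and> card v = Suc j \<and>
      ((\<forall>i\<in>v. \<exists>c\<in>{0..<Suc j}. (i,c) \<in> S) \<and> (\<forall>c\<in>{0..<Suc j}. \<exists>i\<in>v. (i,c) \<in> S))}" by blast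
  qed
qed


definition Pf :: "real \<Rightarrow> nat \<Rightarrow> real" where
  "Pf p j = (\<Sum>k=0..j. (-1) ^ k * real (j choose k) * ((1 - p) ^ k - (1 - p) ^ j) ^ j)"

lemma card_TV_le:
  "real (card (trellis_vertices n (supp_matrix S)))
     \<le> (\<Sum>j=0..n. \<Sum>v\<in>{v. v \<subseteq> {0..<n} \<and> card v = j}.
          of_bool ((\<forall>i\<in>v. \<exists>c\<in>{0..<j}. (i,c) \<in> S) \<and> (\<forall>c\<in>{0..<j}. \<exists>i\<in>v. (i,c) \<in> S)))"
proof -
  define G where "G j v = ((\<forall>i\<in>v. \<exists>c\<in>{0..<j}. (i,c) \<in> S) \<and> (\<forall>c\<in>{0..<j}. \<exists>i\<in>v. (i,c) \<in> S))" for j v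
  define Cj where "Cj j = {v. v \<subseteq> {0..<n} \<and> card v = (j::nat)}" for j
  have finC: "finite (Cj j)" for j unfolding Cj_def by (rule finite_subset[of _ "Pow {0..<n}"]) auto
  have lev: "card (trellis_level n (supp_matrix S) j) \<le> card (Cj j \<inter> {v. G j v})" for j
    using level_sub[of n S j] finC[of j] unfolding Cj_def G_def
    by (intro card_mono) auto
  have "card (trellis_vertices n (supp_matrix S)) \<le> (\<Sum>j\<in>{0..n}. card (trellis_level n (supp_matrix S) j))"
    unfolding trellis_vertices_def by (rule card_UN_le) simp
  also have "\<dots> \<le> (\<Sum>j\<in>{0..n}. card (Cj j \<inter> {v. G j v}))"
    by (intro sum_mono lev)
  finally have "real (card (trellis_vertices n (supp_matrix S))) \<le> (\<Sum>j\<in>{0..n}. real (card (Cj j \<inter> {v. G j v})))"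
    by (metis of_nat_le_iff of_nat_sum)
  also have "\<dots> = (\<Sum>j=0..n. \<Sum>v\<in>Cj j. of_bool (G j v))"
    using finC by (intro sum.cong refl) simp
  finally show ?thesis unfolding Cj_def G_def .
qed

lemma part1:
  assumes "0 \<le> p" "p \<le> 1"
  shows "expected_trellis_vertices n p \<le> (\<Sum>j=0..n. real (n choose j) * Pf p j)"
proof -
  define X where "X = {0..<n} \<times> {0..<n}"
  define G where "G (S::(nat\<times>nat) set) (j::nat) (v::nat set) = ((\<forall>i\<in>v. \<exists>c\<in>{0..<j}. (i,c) \<in> S) \<and> (\<forall>c\<in>{0..<j}. \<exists>i\<in>v. (i,c) \<in> S))" for S j v
  define Cj where "Cj j = {v. v \<subseteq> {0..<n} \<and> card v = (j::nat)}" for j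
  have finX: "finite X" unfolding X_def by simp
  have cX: "card X = n * n" unfolding X_def by (simp add: card_cartesian_product)
  have "expected_trellis_vertices n p = (\<Sum>S\<in>Pow X. W p X S * real (card (trellis_vertices n (supp_matrix S))))"
    unfolding expected_trellis_vertices_def X_def[symmetric]
  proof (intro sum.cong refl)
    fix S assume "S \<in> Pow X"
    then show "p ^ card S * (1 - p) ^ (n * n - card S) * real (card (trellis_vertices n (supp_matrix S)))
      = W p X S * real (card (trellis_vertices n (supp_matrix S)))"
      using W_eq[OF finX, of S p] cX by simp
  qed
  also have "\<dots> \<le> (\<Sum>S\<in>Pow X. W p X S * (\<Sum>j=0..n. \<Sum>v\<in>Cj j. of_bool (G S j v)))"
    unfolding G_def Cj_def
    by (intro sum_mono mult_left_mono card_TV_le W_nonneg assms)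
  also have "\<dots> = (\<Sum>S\<in>Pow X. \<Sum>j=0..n. \<Sum>v\<in>Cj j. W p X S * of_bool (G S j v))"
    by (simp only: sum_distrib_left)
  also have "\<dots> = (\<Sum>j=0..n. \<Sum>v\<in>Cj j. \<Sum>S\<in>Pow X. W p X S * of_bool (G S j v))"
    by (rule swap3)
  also have "\<dots> = (\<Sum>j=0..n. \<Sum>v\<in>Cj j. Pf p j)"
  proof (intro sum.cong refl)
    fix j v assume j: "j \<in> {0..n}" and v: "v \<in> Cj j"
    have fv: "finite v" using v unfolding Cj_def using finite_subset by blast
    have sub: "v \<times> {0..<j} \<subseteq> X" using v j unfolding Cj_def X_def by auto
    show "(\<Sum>S\<in>Pow X. W p X S * of_bool (G S j v)) = Pf p j"
      unfolding G_def Pf_def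
      by (rule probG[OF finX fv _ sub]) (use v in \<open>auto simp: Cj_def\<close>)
  qed
  also have "\<dots> = (\<Sum>j=0..n. real (n choose j) * Pf p j)"
  proof (intro sum.cong refl)
    fix j
    have "card (Cj j) = n choose j" unfolding Cj_def using n_subsets[of "{0..<n}" j] by simp
    then show "(\<Sum>v\<in>Cj j. Pf p j) = real (n choose j) * Pf p j" by simp
  qed
  finally show ?thesis .
qed

lemma Pf_le:
  assumes "0 \<le> p" "p \<le> 1"
  shows "Pf p j \<le> (1 - (1 - p) ^ j) ^ j"
proof -
  define X where "X = {0..<j} \<times> {0..<j}"
  have finX: "finite X" unfolding X_def by simp
  have "Pf p j = (\<Sum>S\<in>Pow X. W p X S * of_bool ((\<forall>i\<in>{0..<j}. \<exists>c\<in>{0..<j}. (i,c) \<in> S) \<and> (\<forall>c\<in>{0..<j}. \<exists>i\<in>{0..<j}. (i,c) \<in> S)))"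
    unfolding Pf_def by (rule probG[symmetric]) (auto simp: X_def)
  also have "\<dots> \<le> (\<Sum>S\<in>Pow X. W p X S * of_bool (\<forall>c\<in>{0..<j}. \<exists>i\<in>{0..<j}. (i,c) \<in> S))"
    by (intro sum_mono mult_left_mono W_nonneg assms) auto
  also have "\<dots> = (1 - (1 - p) ^ j) ^ j"
    using probCol[OF finX, of "{0..<j}" "{0..<j}" p] by (simp add: X_def)
  finally show ?thesis .
qed

lemma U_eq:
  "U_bound n (1 - p) = (\<Sum>j=0..n. real (n choose j) * Pf p j)"
  unfolding U_bound_def Pf_def sum_distrib_left
  by (intro sum.cong refl) (simp only: mult_ac)


lemma exp1_ge: "2718/1000 \<le> exp (1::real)"
  using e_approx_32 by (simp add: abs_if split: if_split_asm)

lemma exp_neg_nat: "exp (- real d) = exp (-1) ^ d"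
  by (simp add: exp_of_nat_mult[symmetric])

lemma exp_neg_le: "exp (- real d) \<le> (1000/2718) ^ d"
proof -
  have "exp (-1::real) = inverse (exp 1)" by (simp add: exp_minus)
  also have "\<dots> \<le> inverse (2718/1000)" using exp1_ge by (intro le_imp_inverse_le) auto
  finally have "exp (-1::real) \<le> 1000/2718" by simp
  then show ?thesis unfolding exp_neg_nat by (intro power_mono) auto
qed

lemma exp_quarter: "41/32 \<le> exp (1/4::real)"
  using exp_lower_Taylor_quadratic[of "1/4::real"] by (simp add: power2_eq_square)

lemma exp_ge_quad: "0 \<le> x \<Longrightarrow> 1 + x + x^2/2 \<le> exp (x::real)"
  by (rule exp_lower_Taylor_quadratic)

lemma pow_diff_le:
  fixes x y :: real
  assumes "0 \<le> y" "y \<le> x" "x \<le> 1"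
  shows "x ^ j - y ^ j \<le> real j * (x - y)"
proof (induction j)
  case 0 then show ?case by simp
next
  case (Suc j)
  have yj: "y ^ j \<le> x ^ j" using assms by (intro power_mono) auto
  have y1: "y ^ j \<le> 1" using assms by (intro power_le_one) auto
  have "x ^ Suc j - y ^ Suc j = x * (x ^ j - y ^ j) + (x - y) * y ^ j" by (simp add: algebra_simps)
  also have "\<dots> \<le> 1 * (x ^ j - y ^ j) + (x - y) * 1"
    using assms yj y1 by (intro add_mono mult_mono) auto
  also have "\<dots> \<le> real j * (x - y) + (x - y)" using Suc by simp
  finally show ?case by (simp add: algebra_simps)
qed

lemma pow_diff_ge:
  fixes f y :: real
  assumes "0 \<le> f" "f \<le> y" "1 \<le> k"
  shows "(y - f) * y ^ (k - 1) \<le> y ^ k - f ^ k"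
proof -
  obtain m where k: "k = Suc m" using assms(3) by (cases k) auto
  have "f ^ m \<le> y ^ m" using assms by (intro power_mono) auto
  then have "f * f ^ m \<le> f * y ^ m" using assms by (intro mult_left_mono) auto
  then show ?thesis unfolding k by (simp add: algebra_simps)
qed

lemma G6_aux1: "6 \<le> k \<Longrightarrow> real k / 2 + 49/50 \<le> 49/50 * (41/32) ^ k"
proof (induction k rule: nat_induct_at_least)
  case base then show ?case by (simp add: power_divide)
next
  case (Suc k)
  have "(6::real) \<le> real k" using Suc(1) by simp
  then have "real (Suc k) / 2 + 49/50 \<le> 41/32 * (real k / 2 + 49/50)" unfolding of_nat_Suc by (simp add: field_simps)
  also have "\<dots> \<le> 41/32 * (49/50 * (41/32) ^ k)" using Suc by simp
  finally show ?case by simp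
qed

lemma G6_aux2: "1 \<le> k \<Longrightarrow> k \<le> 5 \<Longrightarrow> 49/100 + real k / 2 \<le> 49/50 * (41/32) ^ k"
proof -
  assume "1 \<le> k" "k \<le> 5"
  then have "k = 1 \<or> k = 2 \<or> k = 3 \<or> k = 4 \<or> k = 5" by arith
  then show ?thesis by (elim disjE) (simp_all add: power_divide)
qed

lemma G6:
  fixes d k :: nat
  assumes "6 \<le> d" "1 \<le> k" "k \<le> d"
  shows "real k * (real d + 1 - real k) / 2 \<le> (exp (real d - 3 * real k / 4) - 1) * (49/50)"
proof -
  define r where "r = d - k"
  have d: "real d = real r + real k" using assms r_def by simp
  define E where "E = (41/32::real) ^ k"
  have E1: "1 \<le> E" unfolding E_def by (intro one_le_power) auto
  have "E \<le> exp (1/4) ^ k" unfolding E_def using exp_quarter by (intro power_mono) auto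
  also have "exp (1/4) ^ k = exp (real k / 4)" by (simp add: exp_of_nat_mult[symmetric])
  finally have Ek: "E \<le> exp (real k / 4)" .
  have "exp (real d - 3 * real k / 4) = exp (real r) * exp (real k / 4)"
    unfolding d by (simp add: exp_add[symmetric] algebra_simps)
  also have "\<dots> \<ge> (1 + real r) * E"
    using Ek E1 by (intro mult_mono) (auto simp: add.commute)
  finally have ex: "(1 + real r) * E \<le> exp (real d - 3 * real k / 4)" .
  have main: "49/50 \<le> (1 + real r) * (49/50 * E - real k / 2)"
  proof (cases "6 \<le> k")
    case True
    have "49/50 \<le> 49/50 * E - real k / 2" using G6_aux1[OF True] unfolding E_def by simp
    also have "\<dots> = 1 * (49/50 * E - real k / 2)" by simp
    also have "\<dots> \<le> (1 + real r) * (49/50 * E - real k / 2)"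
      using calculation by (intro mult_right_mono) auto
    finally show ?thesis .
  next
    case False
    then have k5: "k \<le> 5" by simp
    then have r1: "1 \<le> r" using assms r_def by simp
    have h: "49/100 \<le> 49/50 * E - real k / 2" using G6_aux2[OF assms(2) k5] unfolding E_def by simp
    have "49/50 = 2 * (49/100::real)" by simp
    also have "\<dots> \<le> (1 + real r) * (49/50 * E - real k / 2)"
      using r1 h by (intro mult_mono) auto
    finally show ?thesis .
  qed
  have "real k * (real d + 1 - real k) / 2 = (1 + real r) * (real k / 2)" unfolding d by (simp add: algebra_simps)
  also have "\<dots> \<le> ((1 + real r) * E - 1) * (49/50)" using main by (simp add: algebra_simps)
  also have "\<dots> \<le> (exp (real d - 3 * real k / 4) - 1) * (49/50)"
    using ex by (intro mult_right_mono) auto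
  finally show ?thesis .
qed


lemma exp_ge_50d: "6 \<le> d \<Longrightarrow> 50 * real d \<le> exp (real d)"
proof (induction d rule: nat_induct_at_least)
  case base
  have "(2718/1000::real) ^ 6 \<le> exp 1 ^ 6" using exp1_ge by (intro power_mono) auto
  also have "exp (1::real) ^ 6 = exp 6" by (simp add: exp_of_nat_mult[symmetric])
  finally show ?case by (simp add: power_divide)
next
  case (Suc d)
  have "exp (real (Suc d)) = exp 1 * exp (real d)" by (simp add: exp_add[symmetric])
  also have "\<dots> \<ge> 2718/1000 * (50 * real d)" using Suc exp1_ge by (intro mult_mono) auto
  finally show ?case using Suc(1) by simp
qed

lemma NK:
  assumes "1 \<le> k" "k \<le> d" "d \<le> (5::nat)"
  shows "real k * (real d / (2 * real d + 1)) * (real d + 1 - real k)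
    \<le> ((real d - (real d / (2 * real d + 1) + (real d / (2 * real d + 1))^2) * real k) +
        (real d - (real d / (2 * real d + 1) + (real d / (2 * real d + 1))^2) * real k)^2 / 2)
       * (1 - (real k - 1) / (1 + real d + real d ^ 2 / 2))"
proof -
  have "d = 1 \<or> d = 2 \<or> d = 3 \<or> d = 4 \<or> d = 5" using assms by arith
  moreover have "k = 1 \<or> k = 2 \<or> k = 3 \<or> k = 4 \<or> k = 5" using assms by arith
  ultimately show ?thesis using assms(2) by (elim disjE) (simp_all add: power_divide power2_eq_square)
qed

lemma KEY:
  fixes d k :: nat and s :: real
  assumes k: "1 \<le> k" "k \<le> d" and s: "0 < s" "s \<le> 1/2"
    and small: "d \<le> 5 \<Longrightarrow> s \<le> real d / (2 * real d + 1)"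
  shows "real k * s * (real d + 1 - real k)
    \<le> (exp (real d - (s + s^2) * real k) - 1) * (1 - (real k - 1) * exp (- real d))"
proof (cases "6 \<le> d")
  case True
  have A: "real k * s * (real d + 1 - real k) \<le> real k * (real d + 1 - real k) / 2"
  proof -
    have "0 \<le> real k * (real d + 1 - real k)" using k by simp
    then have "real k * (real d + 1 - real k) * s \<le> real k * (real d + 1 - real k) * (1/2)"
      using s by (intro mult_left_mono) auto
    then show ?thesis by (simp add: mult_ac)
  qed
  have ss: "s + s^2 \<le> 3/4"
  proof -
    have "s^2 \<le> (1/2)^2" using s by (intro power_mono) auto
    then show ?thesis using s by (simp add: power2_eq_square)
  qed
  have "(s + s^2) * real k \<le> 3/4 * real k" using ss by (intro mult_right_mono) auto
  then have B: "exp (real d - 3 * real k / 4) \<le> exp (real d - (s + s^2) * real k)"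
    by simp
  have B1: "1 \<le> exp (real d - 3 * real k / 4)" using k by simp
  have C: "49/50 \<le> 1 - (real k - 1) * exp (- real d)"
  proof -
    have "(real k - 1) * exp (- real d) \<le> real d * exp (- real d)"
      using k by (intro mult_right_mono) auto
    also have "\<dots> = real d / exp (real d)" by (simp add: exp_minus field_simps)
    also have "\<dots> \<le> 1/50" using exp_ge_50d[OF True] by (simp add: field_simps)
    finally show ?thesis by simp
  qed
  have "real k * s * (real d + 1 - real k) \<le> (exp (real d - 3 * real k / 4) - 1) * (49/50)"
    using A G6[OF True k(1,2)] by linarith
  also have "\<dots> \<le> (exp (real d - (s + s^2) * real k) - 1) * (1 - (real k - 1) * exp (- real d))"
    using B B1 C by (intro mult_mono) auto
  finally show ?thesis .
next
  case False
  then have d5: "d \<le> 5" by simp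
  define \<sigma> where "\<sigma> = real d / (2 * real d + 1)"
  have s\<sigma>: "s \<le> \<sigma>" using small[OF d5] unfolding \<sigma>_def .
  have \<sigma>half: "\<sigma> \<le> 1/2" unfolding \<sigma>_def by (simp add: field_simps)
  define x where "x = real d - (\<sigma> + \<sigma>^2) * real k"
  have \<sigma>\<sigma>: "\<sigma> + \<sigma>^2 \<le> 3/4"
  proof -
    have "0 \<le> \<sigma>" unfolding \<sigma>_def by simp
    then have "\<sigma>^2 \<le> (1/2)^2" using \<sigma>half by (intro power_mono) auto
    then show ?thesis using \<sigma>half by (simp add: power2_eq_square)
  qed
  have "(\<sigma> + \<sigma>^2) * real k \<le> 3/4 * real k" using \<sigma>\<sigma> by (intro mult_right_mono) auto
  moreover have "real k \<le> real d" using k by simp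
  ultimately have x0: "0 \<le> x" unfolding x_def by linarith
  have A: "real k * s * (real d + 1 - real k) \<le> real k * \<sigma> * (real d + 1 - real k)"
    using s\<sigma> k by (intro mult_right_mono mult_left_mono) auto
  have ssx: "s + s^2 \<le> \<sigma> + \<sigma>^2" using s\<sigma> s by (intro add_mono power_mono) auto
  have B: "x + x^2/2 \<le> exp (real d - (s + s^2) * real k) - 1"
  proof -
    have "1 + x + x^2/2 \<le> exp x" by (rule exp_ge_quad[OF x0])
    also have "\<dots> \<le> exp (real d - (s + s^2) * real k)"
    proof -
      have "(s + s^2) * real k \<le> (\<sigma> + \<sigma>^2) * real k" using ssx by (intro mult_right_mono) auto
      then show ?thesis unfolding x_def by simp
    qed
    finally show ?thesis by simp
  qed
  have C: "1 - (real k - 1) / (1 + real d + real d ^ 2 / 2) \<le> 1 - (real k - 1) * exp (- real d)"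
  proof -
    have pos: "0 < 1 + real d + real d ^ 2 / 2" by (simp add: add_pos_nonneg)
    have "exp (- real d) = 1 / exp (real d)" by (simp add: exp_minus field_simps)
    also have "\<dots> \<le> 1 / (1 + real d + real d ^ 2 / 2)"
      using exp_ge_quad[of "real d"] pos by (intro divide_left_mono) auto
    finally have "(real k - 1) * exp (- real d) \<le> (real k - 1) * (1 / (1 + real d + real d ^ 2 / 2))"
      using k by (intro mult_left_mono) auto
    then show ?thesis by simp
  qed
  have C0: "0 \<le> 1 - (real k - 1) / (1 + real d + real d ^ 2 / 2)"
  proof -
    have "0 \<le> real d ^ 2 / 2" by simp
    moreover have "real k \<le> real d" using k by simp
    ultimately have "real k - 1 \<le> 1 + real d + real d ^ 2 / 2" by linarith
    then show ?thesis by (simp add: field_simps add_pos_nonneg)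
  qed
  have "real k * s * (real d + 1 - real k) \<le> (x + x^2/2) * (1 - (real k - 1) / (1 + real d + real d ^ 2 / 2))"
    using A NK[OF k d5, folded \<sigma>_def, folded x_def] by linarith
  also have "\<dots> \<le> (exp (real d - (s + s^2) * real k) - 1) * (1 - (real k - 1) * exp (- real d))"
  proof -
    have "0 \<le> x + x^2/2" using x0 by simp
    then have "0 \<le> exp (real d - (s + s^2) * real k) - 1" using B by linarith
    then show ?thesis using B C C0 by (intro mult_mono) auto
  qed
  finally show ?thesis .
qed


lemma binom_swap:
  fixes n k :: nat
  assumes "1 \<le> k" "k \<le> n"
  shows "real (n choose (n + 1 - k)) * real (n + 1 - k) = real (n choose k) * real k"
proof -
  obtain n' where n: "n = Suc n'" using assms by (cases n) auto
  obtain k' where k: "k = Suc k'" using assms by (cases k) auto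
  have kn: "k' \<le> n'" using assms n k by simp
  have e: "n + 1 - k = Suc (n' - k')" using kn n k by simp
  have "(n choose (n + 1 - k)) * (n + 1 - k) = Suc (n' - k') * (Suc n' choose Suc (n' - k'))"
    unfolding e by (simp only: n mult.commute)
  also have "\<dots> = Suc n' * (n' choose (n' - k'))" by (rule Suc_times_binomial)
  also have "n' choose (n' - k') = n' choose k'" using kn by (rule binomial_symmetric[symmetric])
  also have "Suc n' * (n' choose k') = Suc k' * (Suc n' choose Suc k')" by (rule Suc_times_binomial[symmetric])
  finally have "(n choose (n + 1 - k)) * (n + 1 - k) = (n choose k) * k" unfolding n k by simp
  then show ?thesis by (metis of_nat_mult)
qed

lemma exp_q_low:
  fixes s :: real
  assumes "0 \<le> s" "s \<le> 1/2"
  shows "exp (- (s + s^2)) \<le> 1 - s"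
proof -
  define x where "x = s + s^2"
  have x0: "0 \<le> x" unfolding x_def using assms by simp
  have hm: "t * s \<le> t / 2" if "0 \<le> t" for t
  proof -
    have "t * s \<le> t * (1/2)" using that assms by (intro mult_left_mono) auto
    then show ?thesis by simp
  qed
  have s2: "s^2 \<le> s / 2" using hm[of s] assms by (simp add: power2_eq_square)
  have s3: "s^3 \<le> s^2 / 2" using hm[of "s^2"] assms by (simp add: power2_eq_square power3_eq_cube)
  have s4: "s^4 \<le> s^3 / 2" using hm[of "s^3"] assms by (simp add: power_numeral_reduce power3_eq_cube)
  have s5: "s^5 \<le> s^4 / 2" using hm[of "s^4"] assms by (simp add: power_numeral_reduce)
  have poly: "1 \<le> (1 - s) * (1 + x + x^2/2)"
  proof -
    have "(1 - s) * (1 + x + x^2/2) = 1 + s^2/2 - s^3/2 - s^4/2 - s^5/2"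
      unfolding x_def by (simp add: field_simps power2_eq_square power_numeral_reduce power3_eq_cube)
    moreover have "s^3 + s^4 + s^5 \<le> s^2"
    proof -
      have "s^4 \<le> s^2/4" using s3 s4 by linarith
      moreover have "s^5 \<le> s^2/8" using s3 s4 s5 by linarith
      moreover have "0 \<le> s^2" by simp
      ultimately show ?thesis using s3 by linarith
    qed
    ultimately show ?thesis by linarith
  qed
  have "(1 - s) * (1 + x + x^2/2) \<le> (1 - s) * exp x"
    using assms by (intro mult_left_mono exp_ge_quad x0) auto
  with poly have "1 \<le> (1 - s) * exp x" by linarith
  then have "1 / exp x \<le> 1 - s" by (simp add: field_simps)
  moreover have "exp (- x) = 1 / exp x" by (simp add: exp_minus field_simps)
  ultimately show ?thesis unfolding x_def[symmetric] by simp
qed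


lemma regimeL:
  fixes n d :: nat
  assumes d1: "1 \<le> d" and nd: "2 * d + 1 \<le> n"
  shows "(\<Sum>j=0..n. real (n choose j) * (1 - (1 - real d / real n) ^ j) ^ j) \<le> (2 - exp (- real d)) ^ n"
proof -
  define s where "s = real d / real n"
  define q where "q = 1 - s"
  define b where "b = exp (- real d)"
  define a where "a j = real (n choose j) * ((1 - q^j)^j - (1 - b)^j)" for j
  have n0: "0 < real n" using nd by simp
  have sn: "s * real n = real d" unfolding s_def using n0 by simp
  have s0: "0 < s" unfolding s_def using d1 n0 by simp
  have s\<sigma>: "s \<le> real d / (2 * real d + 1)"
    unfolding s_def using d1 nd by (intro divide_left_mono) auto
  have shalf: "s \<le> 1/2"
  proof -
    have "real d / (2 * real d + 1) \<le> 1/2" by (simp add: field_simps)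
    then show ?thesis using s\<sigma> by linarith
  qed
  have q0: "0 < q" "q \<le> 1" unfolding q_def using s0 shalf by auto
  have b0: "0 < b" "b \<le> 1" unfolding b_def by auto
  have qlow: "exp (- (s + s^2)) \<le> q" unfolding q_def using s0 shalf by (intro exp_q_low) auto
  have qup: "q \<le> exp (- s)" unfolding q_def using exp_ge_add_one_self[of "-s"] by simp
  have qpow_low: "exp (- (s + s^2) * real m) \<le> q ^ m" for m :: nat
  proof -
    have "exp (- (s + s^2) * real m) = exp (- (s + s^2)) ^ m"
      by (simp add: exp_of_nat_mult[symmetric] mult.commute)
    also have "\<dots> \<le> q ^ m" using qlow by (intro power_mono) auto
    finally show ?thesis .
  qed
  have qpow_up: "q ^ m \<le> exp (- s * real m)" for m :: nat
  proof -
    have "q ^ m \<le> exp (- s) ^ m" using qup q0 by (intro power_mono) auto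
    also have "\<dots> = exp (- s * real m)" by (simp add: exp_of_nat_mult[symmetric] mult.commute)
    finally show ?thesis .
  qed
  have F0: "b \<le> q ^ j" if "j \<le> n - d" for j
  proof -
    have "q ^ (n - d) \<le> q ^ j" using that q0 by (intro power_decreasing) auto
    moreover have "exp (- (s + s^2) * real (n - d)) \<le> q ^ (n - d)" by (rule qpow_low)
    moreover have "b \<le> exp (- (s + s^2) * real (n - d))"
    proof -
      have "real (n - d) = real n - real d" using nd by simp
      then have "(s + s^2) * real (n - d) = real d * (1 - s^2)"
        using sn by (simp add: algebra_simps power2_eq_square)
      also have "\<dots> \<le> real d"
      proof -
        have "0 \<le> real d * s^2" by simp
        then show ?thesis by (simp add: right_diff_distrib)
      qed
      finally have h: "(s + s^2) * real (n - d) \<le> real d" .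
      have "(- (s + s^2)) * real (n - d) = - ((s + s^2) * real (n - d))" by (rule mult_minus_left)
      with h have "- real d \<le> - (s + s^2) * real (n - d)" by linarith
      then show ?thesis unfolding b_def by simp
    qed
    ultimately show ?thesis by linarith
  qed
  have aneg: "a j \<le> 0" if "j \<le> n - d" for j
  proof -
    have "(1 - q^j)^j \<le> (1 - b)^j"
      using F0[OF that] q0 by (intro power_mono) (auto simp: power_le_one)
    then show ?thesis unfolding a_def by (simp add: mult_nonneg_nonpos)
  qed
  have Fk: "a (n + 1 - k) + a k \<le> 0" if k: "1 \<le> k" "k \<le> d" for k
  proof -
    define j where "j = n + 1 - k"
    have kn: "k \<le> n - d" using k nd by simp
    have Cnn: "0 \<le> real (n choose k)" by simp
    have key0: "real k * s * (real d + 1 - real k) \<le> (exp (real d - (s + s^2) * real k) - 1) * (1 - (real k - 1) * b)"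
      unfolding b_def by (rule KEY[OF k s0 shalf s\<sigma>])
    have b1: "0 \<le> 1 - (real k - 1) * b"
    proof -
      have "exp (real d) \<ge> 1 + real d" by simp
      then have "b \<le> 1 / (1 + real d)" unfolding b_def by (simp add: exp_minus field_simps)
      then have "(real k - 1) * b \<le> (real k - 1) * (1 / (1 + real d))" using k by (intro mult_left_mono) auto
      also have "\<dots> \<le> 1" using k by (simp add: field_simps)
      finally show ?thesis by simp
    qed
    have good: "real (n choose k) * real k * b * (s * (real d + 1 - real k)) \<le> - a k"
    proof -
      have qk: "b \<le> q ^ k" by (rule F0[OF kn])
      have "real k * s * (real d + 1 - real k) * b \<le> (exp (real d - (s + s^2) * real k) - 1) * (1 - (real k - 1) * b) * b"
        using key0 b0 by (intro mult_right_mono) auto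
      also have "\<dots> = (exp (- (s + s^2) * real k) - b) * (1 - (real k - 1) * b)"
      proof -
        have "exp (real d - (s + s^2) * real k) * b = exp (- (s + s^2) * real k)"
          unfolding b_def by (simp add: exp_add[symmetric] algebra_simps)
        then show ?thesis by (simp add: algebra_simps)
      qed
      also have "\<dots> \<le> (q ^ k - b) * (1 - (real k - 1) * b)"
        using qpow_low[of k] b1 by (intro mult_right_mono) auto
      also have "\<dots> \<le> (q ^ k - b) * (1 - b) ^ (k - 1)"
      proof -
        have "1 + real (k - 1) * (- b) \<le> (1 + - b) ^ (k - 1)"
          using b0 by (intro Bernoulli_inequality) auto
        then have "1 - (real k - 1) * b \<le> (1 - b) ^ (k - 1)" using k by (simp add: of_nat_diff)
        then show ?thesis using qk by (intro mult_left_mono) auto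
      qed
      also have "\<dots> \<le> (1 - b) ^ k - (1 - q ^ k) ^ k"
      proof -
        have "(q ^ k - b) = (1 - b) - (1 - q ^ k)" by simp
        moreover have "((1 - b) - (1 - q ^ k)) * (1 - b) ^ (k - 1) \<le> (1 - b) ^ k - (1 - q ^ k) ^ k"
          using qk q0 k by (intro pow_diff_ge) (auto simp: power_le_one)
        ultimately show ?thesis by simp
      qed
      finally have "real k * s * (real d + 1 - real k) * b \<le> (1 - b) ^ k - (1 - q ^ k) ^ k" .
      then have "real (n choose k) * (real k * s * (real d + 1 - real k) * b) \<le> real (n choose k) * ((1 - b) ^ k - (1 - q ^ k) ^ k)"
        by (intro mult_left_mono) auto
      then show ?thesis unfolding a_def by (simp add: algebra_simps)
    qed
    have bad: "a j \<le> real (n choose k) * real k * b * (s * (real d + 1 - real k))"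
    proof (cases "1 - q ^ j \<le> 1 - b")
      case True
      then have "(1 - q^j)^j \<le> (1 - b)^j" using q0 by (intro power_mono) (auto simp: power_le_one)
      then have "a j \<le> 0" unfolding a_def by (simp add: mult_nonneg_nonpos)
      moreover have "0 \<le> real (n choose k) * real k * b * (s * (real d + 1 - real k))"
        using b0 s0 k by (intro mult_nonneg_nonneg) auto
      ultimately show ?thesis by linarith
    next
      case False
      have "(1 - q^j)^j - (1 - b)^j \<le> real j * ((1 - q^j) - (1 - b))"
        using False b0 q0 by (intro pow_diff_le) (auto simp: zero_le_power)
      also have "\<dots> = real j * (b - q ^ j)" by simp
      also have "b - q ^ j \<le> b * (s * (real d + 1 - real k))"
      proof -
        have jn: "j + (k - 1) = n" unfolding j_def using k nd by simp
        have "exp (- (s + s^2) * real n) \<le> q ^ n" by (rule qpow_low)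
        also have "q ^ n = q ^ j * q ^ (k - 1)" unfolding jn[symmetric] by (rule power_add)
        also have "\<dots> \<le> q ^ j * exp (- s * real (k - 1))"
          using qpow_up[of "k - 1"] q0 by (intro mult_left_mono) auto
        finally have h: "exp (- (s + s^2) * real n) \<le> q ^ j * exp (- s * real (k - 1))" .
        have "exp (- (s + s^2) * real n) = b * exp (- (s * (real d + 1 - real k))) * exp (- s * real (k - 1))"
        proof -
          have "- (s + s^2) * real n = - real d + - (s * (real d + 1 - real k)) + - s * real (k - 1)"
            using sn k by (simp add: algebra_simps power2_eq_square of_nat_diff)
          then show ?thesis unfolding b_def by (simp add: exp_add[symmetric])
        qed
        with h have "b * exp (- (s * (real d + 1 - real k))) \<le> q ^ j"
          by (simp add: mult_le_cancel_right)
        moreover have "1 - s * (real d + 1 - real k) \<le> exp (- (s * (real d + 1 - real k)))"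
          using exp_ge_add_one_self[of "- (s * (real d + 1 - real k))"] by simp
        ultimately have "b * (1 - s * (real d + 1 - real k)) \<le> q ^ j"
          using b0 by (meson mult_left_mono less_imp_le order.trans)
        then show ?thesis by (simp add: algebra_simps)
      qed
      then have "real j * (b - q ^ j) \<le> real j * (b * (s * (real d + 1 - real k)))"
        by (intro mult_left_mono) auto
      finally have "(1 - q^j)^j - (1 - b)^j \<le> real j * (b * (s * (real d + 1 - real k)))" .
      then have "a j \<le> real (n choose j) * (real j * (b * (s * (real d + 1 - real k))))"
        unfolding a_def by (intro mult_left_mono) auto
      also have "\<dots> = (real (n choose j) * real j) * (b * (s * (real d + 1 - real k)))" by simp
      also have "real (n choose j) * real j = real (n choose k) * real k"
        unfolding j_def using k nd by (intro binom_swap) auto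
      finally show ?thesis by (simp add: mult_ac)
    qed
    show ?thesis using good bad unfolding j_def by linarith
  qed
  have split: "{0..n} = {0..n - d} \<union> {n - d + 1..n}" using nd by auto
  have "(\<Sum>j=0..n. a j) = (\<Sum>j=0..n-d. a j) + (\<Sum>j=n-d+1..n. a j)"
    unfolding split by (rule sum.union_disjoint) auto
  also have "(\<Sum>j=n-d+1..n. a j) = (\<Sum>k=1..d. a (n + 1 - k))"
    using nd by (intro sum.reindex_bij_witness[of _ "\<lambda>k. n + 1 - k" "\<lambda>j. n + 1 - j"]) auto
  also have "(\<Sum>j=0..n-d. a j) \<le> (\<Sum>k=1..d. a k)"
  proof -
    have sub: "{1..d} \<subseteq> {0..n-d}" using nd by auto
    have "(\<Sum>j=0..n-d. a j) = (\<Sum>j\<in>{1..d}. a j) + (\<Sum>j\<in>{0..n-d} - {1..d}. a j)"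
      using sum.subset_diff[OF sub finite_atLeastAtMost, of a] by linarith
    also have "(\<Sum>j\<in>{0..n-d} - {1..d}. a j) \<le> 0" by (intro sum_nonpos aneg) auto
    finally show ?thesis by simp
  qed
  also have "(\<Sum>k=1..d. a k) + (\<Sum>k=1..d. a (n + 1 - k)) \<le> 0"
    unfolding sum.distrib[symmetric] by (intro sum_nonpos) (use Fk in \<open>auto simp: add.commute\<close>)
  finally have asum: "(\<Sum>j=0..n. a j) \<le> 0" by simp
  have binom: "(2 - b) ^ n = (\<Sum>j=0..n. real (n choose j) * (1 - b) ^ j)"
  proof -
    have "(2 - b) ^ n = ((1 - b) + 1) ^ n" by simp
    also have "\<dots> = (\<Sum>j\<le>n. real (n choose j) * (1 - b) ^ j * 1 ^ (n - j))" by (rule binomial_ring)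
    finally show ?thesis by (simp add: atLeast0AtMost)
  qed
  have "(\<Sum>j=0..n. real (n choose j) * (1 - q ^ j) ^ j) = (\<Sum>j=0..n. a j) + (\<Sum>j=0..n. real (n choose j) * (1 - b) ^ j)"
    unfolding a_def sum.distrib[symmetric] by (intro sum.cong refl) (simp add: algebra_simps)
  also have "\<dots> \<le> (2 - b) ^ n" using asum binom by linarith
  finally show ?thesis unfolding q_def s_def b_def .
qed


lemma A_suff:
  fixes n :: nat and b q :: real
  assumes n1: "1 \<le> n" and q: "0 \<le> q" "q \<le> 1" and b: "0 \<le> b" "b \<le> 1"
    and A: "real n * 2 ^ (n - 1) * b \<le> (1 + q) ^ n - 1"
  shows "(\<Sum>j=0..n. real (n choose j) * (1 - q ^ j) ^ j) \<le> (2 - b) ^ n"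
proof -
  have t: "(1 - q ^ j) ^ j \<le> (1 - q ^ j) + of_bool (j = 0)" for j :: nat
  proof (cases "j = 0")
    case True then show ?thesis by simp
  next
    case False
    have "0 \<le> 1 - q ^ j" "1 - q ^ j \<le> 1" using q by (auto simp: power_le_one)
    then have "(1 - q ^ j) ^ j \<le> (1 - q ^ j) ^ 1" using False by (intro power_decreasing) auto
    then show ?thesis by simp
  qed
  have "(\<Sum>j=0..n. real (n choose j) * (1 - q ^ j) ^ j) \<le> (\<Sum>j=0..n. real (n choose j) * ((1 - q ^ j) + of_bool (j = 0)))"
    by (intro sum_mono mult_left_mono t) auto
  also have "\<dots> = (\<Sum>j=0..n. real (n choose j)) - (\<Sum>j=0..n. real (n choose j) * q ^ j) + (\<Sum>j=0..n. real (n choose j) * of_bool (j = 0))"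
    by (simp add: sum.distrib sum_subtractf algebra_simps)
  also have "(\<Sum>j=0..n. real (n choose j)) = 2 ^ n"
  proof -
    have "(\<Sum>j=0..n. real (n choose j)) = real (\<Sum>j\<le>n. n choose j)" by (simp add: atLeast0AtMost)
    also have "\<dots> = 2 ^ n" by (simp add: choose_row_sum)
    finally show ?thesis .
  qed
  also have "(\<Sum>j=0..n. real (n choose j) * q ^ j) = (1 + q) ^ n"
  proof -
    have "(q + 1) ^ n = (\<Sum>j\<le>n. real (n choose j) * q ^ j * 1 ^ (n - j))" by (rule binomial_ring)
    then show ?thesis by (simp add: atLeast0AtMost add.commute)
  qed
  also have "(\<Sum>j=0..n. real (n choose j) * of_bool (j = 0)) = 1"
    by (simp add: sum.delta' of_bool_def if_distrib cong: if_cong)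
  finally have V: "(\<Sum>j=0..n. real (n choose j) * (1 - q ^ j) ^ j) \<le> 2 ^ n - (1 + q) ^ n + 1" by simp
  have "1 + real n * (- (b / 2)) \<le> (1 + - (b / 2)) ^ n"
    using b by (intro Bernoulli_inequality) auto
  then have "2 ^ n * (1 - real n * b / 2) \<le> 2 ^ n * (1 - b / 2) ^ n" by (intro mult_left_mono) auto
  also have "2 ^ n * (1 - b / 2) ^ n = (2 - b) ^ n" by (simp add: power_mult_distrib[symmetric] algebra_simps)
  also have "2 ^ n * (1 - real n * b / 2) = 2 ^ n - real n * 2 ^ (n - 1) * b"
  proof -
    have "(2::real) ^ n = 2 * 2 ^ (n - 1)" using n1 by (simp add: power_eq_if)
    then show ?thesis by (simp add: algebra_simps)
  qed
  finally have "2 ^ n - real n * 2 ^ (n - 1) * b \<le> (2 - b) ^ n" .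
  with V A show ?thesis by linarith
qed

lemma c0_pow: "12 \<le> n \<Longrightarrow> real n \<le> (3/4 * (41/32)^2) ^ n"
proof (induction n rule: nat_induct_at_least)
  case base then show ?case by (simp add: power_divide)
next
  case (Suc n)
  have "real (Suc n) \<le> 3/4 * (41/32)^2 * real n" using Suc(1) by (simp add: power_divide)
  also have "\<dots> \<le> 3/4 * (41/32)^2 * (3/4 * (41/32)^2) ^ n" using Suc by (intro mult_left_mono) auto
  finally show ?case by simp
qed

lemma regimeH:
  fixes n d :: nat
  assumes n12: "12 \<le> n" and nd: "n \<le> 2 * d" and dn: "d < n"
  shows "real n * 2 ^ (n - 1) * exp (- real d) \<le> (1 + (1 - real d / real n)) ^ n - 1"
proof -
  define s where "s = real d / real n"
  define b where "b = exp (- real d)"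
  define \<rho> where "\<rho> = (1 - s / 2) * exp s"
  have n0: "0 < real n" using n12 by simp
  have sn: "s * real n = real d" unfolding s_def using n0 by simp
  have s1: "s < 1" unfolding s_def using dn n0 by simp
  have shalf: "1/2 \<le> s" unfolding s_def using nd n0 by (simp add: field_simps)
  have rho: "3/4 * (41/32)^2 \<le> \<rho>"
  proof -
    have e12: "(41/32)^2 \<le> exp (1/2::real)"
    proof -
      have "(41/32::real)^2 \<le> exp (1/4) ^ 2" using exp_quarter by (intro power_mono) auto
      also have "exp (1/4::real) ^ 2 = exp (1/2)" by (simp add: exp_of_nat_mult[symmetric])
      finally show ?thesis .
    qed
    have "exp s = exp (1/2) * exp (s - 1/2)" by (simp add: exp_add[symmetric])
    also have "\<dots> \<ge> exp (1/2) * (s + 1/2)"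
      using exp_ge_add_one_self[of "s - 1/2"] by (intro mult_left_mono) auto
    finally have es: "exp (1/2) * (s + 1/2) \<le> exp s" .
    have pol: "3/4 \<le> (1 - s / 2) * (s + 1/2)"
    proof -
      have h0: "0 \<le> (s - 1/2) * (1 - s)" using shalf s1 by (intro mult_nonneg_nonneg) auto
      have h1: "(1 - s / 2) * (s + 1/2) - 3/4 = (s - 1/2) * (1 - s) / 2" by (simp add: field_simps)
      show ?thesis using h0 h1 by linarith
    qed
    have "3/4 * (41/32)^2 \<le> (1 - s / 2) * (s + 1/2) * exp (1/2)"
      using pol e12 s1 shalf by (intro mult_mono) auto
    also have "\<dots> = (1 - s / 2) * (exp (1/2) * (s + 1/2))" by simp
    also have "\<dots> \<le> (1 - s / 2) * exp s" using es s1 by (intro mult_left_mono) auto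
    finally show ?thesis unfolding \<rho>_def .
  qed
  have rhon: "real n \<le> \<rho> ^ n"
    using c0_pow[OF n12] rho by (meson order.trans power_mono zero_le_divide_iff zero_le_numeral zero_le_power mult_nonneg_nonneg)
  have ident: "real n * 2 ^ (n - 1) * b * \<rho> ^ n * 2 = real n * (2 - s) ^ n"
  proof -
    have p2: "(2::real) ^ (n - 1) * 2 = 2 ^ n" using n12 by (simp add: power_eq_if)
    have "b * exp s ^ n = 1"
      unfolding b_def using sn by (simp add: exp_of_nat_mult[symmetric] exp_add[symmetric] mult.commute)
    moreover have "2 ^ n * (1 - s / 2) ^ n = (2 - s) ^ n" by (simp add: power_mult_distrib[symmetric] algebra_simps)
    ultimately have "2 ^ n * (b * \<rho> ^ n) = (2 - s) ^ n"
      unfolding \<rho>_def power_mult_distrib by (metis mult.assoc mult.commute mult.right_neutral)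
    then show ?thesis using p2 by (metis mult.assoc mult.commute)
  qed
  have b0: "0 \<le> b" unfolding b_def by simp
  have "real n * 2 ^ (n - 1) * b * real n \<le> real n * 2 ^ (n - 1) * b * \<rho> ^ n"
    using rhon b0 by (intro mult_left_mono) auto
  also have "\<dots> = real n * (2 - s) ^ n / 2" using ident by (simp add: field_simps)
  finally have h: "real n * 2 ^ (n - 1) * b \<le> (2 - s) ^ n / 2"
    using n0 by (simp add: field_simps)
  have two: "2 \<le> (2 - s) ^ n"
  proof -
    have "1 + real n * (1 - s) \<le> (1 + (1 - s)) ^ n" using s1 by (intro Bernoulli_inequality) auto
    moreover have "real n * (1 - s) = real n - real d" using sn by (simp add: algebra_simps)
    moreover have "1 \<le> real n - real d" using dn by simp
    ultimately show ?thesis by simp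
  qed
  have "real n * 2 ^ (n - 1) * b \<le> (2 - s) ^ n - 1" using h two by linarith
  then show ?thesis unfolding s_def b_def by simp
qed


lemma numA:
  assumes "n \<le> 11" "1 \<le> d" "d < n" "n \<le> 2 * d"
    "\<not> ((n = 2 \<and> d = 1) \<or> (n = 3 \<and> d = 2) \<or> (n = 4 \<and> d = 2) \<or> (n = 4 \<and> d = 3))"
  shows "real n * 2 ^ (n - 1) * (1000/2718) ^ d \<le> (1 + (1 - real d / real n)) ^ n - 1"
proof -
  have "n = 2 \<or> n = 3 \<or> n = 4 \<or> n = 5 \<or> n = 6 \<or> n = 7 \<or> n = 8 \<or> n = 9 \<or> n = 10 \<or> n = 11"
    using assms by arith
  moreover have "d = 1 \<or> d = 2 \<or> d = 3 \<or> d = 4 \<or> d = 5 \<or> d = 6 \<or> d = 7 \<or> d = 8 \<or> d = 9 \<or> d = 10"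
    using assms by arith
  ultimately show ?thesis using assms(3,4,5) by (elim disjE) (simp_all add: power_divide)
qed

lemma numD:
  assumes "(n = 2 \<and> d = 1) \<or> (n = 3 \<and> d = 2) \<or> (n = 4 \<and> d = 2) \<or> (n = 4 \<and> d = 3)"
  shows "(\<Sum>j=0..n. real (n choose j) * (1 - (1 - real d / real n) ^ j) ^ j) \<le> (2 - (1000/2718) ^ d) ^ n"
  using assms
  by (elim disjE conjE; simp add: power_divide numeral_eq_Suc atLeast0_atMost_Suc binomial_Suc_Suc)

lemma part2:
  fixes n d :: nat
  assumes d1: "1 \<le> d" and dn: "d < n"
  shows "(\<Sum>j=0..n. real (n choose j) * (1 - (1 - real d / real n) ^ j) ^ j) \<le> (2 - exp (- real d)) ^ n"
proof (cases "2 * d + 1 \<le> n")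
  case True
  then show ?thesis by (rule regimeL[OF d1])
next
  case False
  then have nd: "n \<le> 2 * d" by simp
  have n0: "0 < real n" using dn by simp
  have q: "0 \<le> 1 - real d / real n" "1 - real d / real n \<le> 1" using dn n0 by (auto simp: field_simps)
  have b: "0 \<le> exp (- real d)" "exp (- real d) \<le> 1" by auto
  have n1: "1 \<le> n" using dn by simp
  show ?thesis
  proof (cases "12 \<le> n")
    case True
    show ?thesis by (rule A_suff[OF n1 q b regimeH[OF True nd dn]])
  next
    case False
    then have n11: "n \<le> 11" by simp
    have br: "exp (- real d) \<le> (1000/2718) ^ d" by (rule exp_neg_le)
    show ?thesis
    proof (cases "(n = 2 \<and> d = 1) \<or> (n = 3 \<and> d = 2) \<or> (n = 4 \<and> d = 2) \<or> (n = 4 \<and> d = 3)")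
      case True
      have "(\<Sum>j=0..n. real (n choose j) * (1 - (1 - real d / real n) ^ j) ^ j) \<le> (2 - (1000/2718) ^ d) ^ n"
        by (rule numD[OF True])
      also have "\<dots> \<le> (2 - exp (- real d)) ^ n"
      proof (intro power_mono)
        have "((1000::real)/2718) ^ d \<le> 1" by (intro power_le_one) auto
        then show "0 \<le> 2 - ((1000::real)/2718) ^ d" by simp
      qed (use br in simp)
      finally show ?thesis .
    next
      case nD: False
      have "real n * 2 ^ (n - 1) * exp (- real d) \<le> real n * 2 ^ (n - 1) * (1000/2718) ^ d"
        using br by (intro mult_left_mono) auto
      also have "\<dots> \<le> (1 + (1 - real d / real n)) ^ n - 1" by (rule numA[OF n11 d1 dn nd nD])
      finally show ?thesis by (rule A_suff[OF n1 q b])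
    qed
  qed
qed


theorem lemma6:
  fixes d n :: nat
  assumes "1 \<le> d" "d < n"
  defines "p \<equiv> real d / real n"
  defines "q \<equiv> 1 - p"
  shows "expected_trellis_vertices n p \<le> U_bound n q \<and> U_bound n q \<le> (2 - exp (- real d)) ^ n"
proof -
  have n0: "0 < real n" using assms(2) by simp
  have p0: "0 \<le> p" unfolding p_def by simp
  have p1: "p \<le> 1" unfolding p_def using assms(2) n0 by (simp add: field_simps)
  have U: "U_bound n q = (\<Sum>j=0..n. real (n choose j) * Pf p j)"
    unfolding q_def by (rule U_eq)
  have A: "expected_trellis_vertices n p \<le> U_bound n q"
    unfolding U by (rule part1[OF p0 p1])
  have "U_bound n q \<le> (\<Sum>j=0..n. real (n choose j) * (1 - (1 - p) ^ j) ^ j)"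
    unfolding U by (intro sum_mono mult_left_mono Pf_le[OF p0 p1]) auto
  also have "\<dots> \<le> (2 - exp (- real d)) ^ n"
    unfolding p_def by (rule part2[OF assms(1,2)])
  finally show ?thesis using A by simp
qed

end
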